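(* Let $T_1$ and $T_2$ be equidistant trees on leaf set $\{1,\dots,n\}$ with ultrametrics $u^1,u^2\in\mathbb{R}^e$, $e=\binom n2$. If $(\operatorname{argmax})^i\{u^1\}=(\operatorname{argmax})^i\{u^2\}$ for all $0<i<e$, then $T_1$ and $T_2$ have the same tree topology.
   Context: An equidistant tree is a rooted phylogenetic tree with nonnegative edge lengths and all root-to-leaf distances equal; its ultrametric is the vector $u=(u_{12},\dots,u_{n-1,n})$ of pairwise leaf distances (for all distinct $i,j,k$ the maximum of $u_{ij},u_{ik},u_{jk}$ is attained at least twice). For a vector $x$, $(\operatorname{argmax})^i\{x\}$ denotes the set of indices of entries of $x$ achieving the $i$-th largest value among the entries of $x$. *)

theory Defs
  imports Complex_Main
begin

text \<open>Rooted phylogenetic trees on leaf set {1..n} are encoded by their cluster systems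
  (hierarchies): each vertex is identified with the set of leaves below it.
  The tree topology of the tree is exactly its hierarchy.\<close>

definition hierarchy :: "nat \<Rightarrow> nat set set \<Rightarrow> bool" where
  "hierarchy n H \<longleftrightarrow>
     H \<subseteq> Pow {1..n} \<and> {} \<notin> H \<and> {1..n} \<in> H \<and> (\<forall>i\<in>{1..n}. {i} \<in> H) \<and>
     (\<forall>A\<in>H. \<forall>B\<in>H. A \<subseteq> B \<or> B \<subseteq> A \<or> A \<inter> B = {})"

text \<open>An equidistant tree: topology H together with vertex heights h (distance from the
  vertex down to any of its leaves; all leaves at height 0, so all root-to-leaf distances
  are equal). Edge from child A to parent B has length h B - h A: leaf edges are
  nonnegative and internal edges positive (the topology is that of the tree with
  zero-length internal edges contracted).\<close>

definition equidistant_tree :: "nat \<Rightarrow> nat set set \<Rightarrow> (nat set \<Rightarrow> real) \<Rightarrow> bool" where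
  "equidistant_tree n H h \<longleftrightarrow>
     hierarchy n H \<and> (\<forall>i\<in>{1..n}. h {i} = 0) \<and>
     (\<forall>A\<in>H. \<forall>B\<in>H. A \<subset> B \<longrightarrow> h A \<le> h B) \<and>
     (\<forall>A\<in>H. \<forall>B\<in>H. A \<subset> B \<and> 2 \<le> card A \<longrightarrow> h A < h B)"

definition tree_ultrametric :: "nat set set \<Rightarrow> (nat set \<Rightarrow> real) \<Rightarrow> nat \<Rightarrow> nat \<Rightarrow> real" where
  "tree_ultrametric H h i j = 2 * h (\<Inter>{A\<in>H. i \<in> A \<and> j \<in> A})"

definition leaf_pairs :: "nat \<Rightarrow> (nat \<times> nat) set" where
  "leaf_pairs n = {(i, j). 1 \<le> i \<and> i < j \<and> j \<le> n}"

text \<open>(argmax)^k {x}: the indices of entries achieving the k-th largest (distinct) value;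
  empty if there are fewer than k distinct values.\<close>

definition argmax_k :: "'i set \<Rightarrow> ('i \<Rightarrow> real) \<Rightarrow> nat \<Rightarrow> 'i set" where
  "argmax_k E x k =
     (if 1 \<le> k \<and> k \<le> card (x ` E)
      then {p \<in> E. x p = rev (sorted_list_of_set (x ` E)) ! (k - 1)}
      else {})"

end

theory Submission imports Defs "HOL.Binomial" begin

lemma L_props:
  fixes S :: "real set"
  assumes "finite S"
  defines "L \<equiv> rev (sorted_list_of_set S)"
  shows "length L = card S" "set L = S" "distinct L"
    "\<And>i j. i < length L \<Longrightarrow> j < length L \<Longrightarrow> L ! i \<le> L ! j \<longleftrightarrow> j \<le> i"
proof -
  show "length L = card S" "set L = S" "distinct L" using assms by auto
  have ss: "sorted_wrt (<) (sorted_list_of_set S)" by (simp add: strict_sorted_list_of_set)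
  fix i j assume i: "i < length L" and j: "j < length L"
  let ?s = "sorted_list_of_set S"
  have li: "L ! i = ?s ! (length ?s - Suc i)" using i by (simp add: L_def rev_nth)
  have lj: "L ! j = ?s ! (length ?s - Suc j)" using j by (simp add: L_def rev_nth)
  have len: "length L = length ?s" by (simp add: L_def)
  have mono: "?s ! a \<le> ?s ! b \<longleftrightarrow> a \<le> b" if a: "a < length ?s" and b: "b < length ?s" for a b
  proof
    assume "?s ! a \<le> ?s ! b"
    show "a \<le> b"
    proof (rule ccontr)
      assume "\<not> a \<le> b" hence "b < a" by simp
      hence "?s ! b < ?s ! a" using sorted_wrt_nth_less[OF ss _ a] by simp
      thus False using \<open>?s ! a \<le> ?s ! b\<close> by simp
    qed
  next
    assume "a \<le> b"
    then consider "a = b" | "a < b" by linarith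
    then show "?s ! a \<le> ?s ! b"
    proof cases
      case 2 then show ?thesis using sorted_wrt_nth_less[OF ss _ b] by fastforce
    qed simp
  qed
  have "length L - Suc i < length ?s" "length L - Suc j < length ?s" using i j len by auto
  hence "L ! i \<le> L ! j \<longleftrightarrow> length L - Suc i \<le> length L - Suc j" unfolding li lj using mono len by simp
  also have "\<dots> \<longleftrightarrow> j \<le> i" using i j by linarith
  finally show "L ! i \<le> L ! j \<longleftrightarrow> j \<le> i" .
qed

lemma argmax_mem:
  assumes "p \<in> E"
  shows "p \<in> argmax_k E x (Suc i) \<longleftrightarrow> i < card (x ` E) \<and> x p = rev (sorted_list_of_set (x ` E)) ! i"
  using assms by (auto simp: argmax_k_def)

lemma order_transfer:
  fixes E :: "'i set" and x y :: "'i \<Rightarrow> real"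
  assumes fin: "finite E" and ce: "card E \<le> e"
    and eq: "\<forall>k. 0 < k \<and> k < e \<longrightarrow> argmax_k E x k = argmax_k E y k"
    and p: "p \<in> E" and q: "q \<in> E"
  shows "x p \<le> x q \<longleftrightarrow> y p \<le> y q"
proof -
  define Lx where "Lx = rev (sorted_list_of_set (x ` E))"
  define Ly where "Ly = rev (sorted_list_of_set (y ` E))"
  note X = L_props[of "x ` E", OF finite_imageI[OF fin], folded Lx_def]
  note Y = L_props[of "y ` E", OF finite_imageI[OF fin], folded Ly_def]
  have cx: "card (x ` E) \<le> e" using ce card_image_le[OF fin, of x] by linarith
  have cy: "card (y ` E) \<le> e" using ce card_image_le[OF fin, of y] by linarith
  have same: "i = j" if r: "r \<in> E" and i: "i < length Lx" "Lx ! i = x r"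
    and j: "j < length Ly" "Ly ! j = y r" for r i j
  proof (cases "Suc i < e")
    case True
    have "r \<in> argmax_k E x (Suc i)" using argmax_mem[OF r] i X(1) Lx_def by auto
    hence "r \<in> argmax_k E y (Suc i)" using eq True by auto
    hence "i < length Ly" "Ly ! i = y r" using argmax_mem[OF r] Y(1) Ly_def by auto
    then show ?thesis using j Y(3) by (metis nth_eq_iff_index_eq)
  next
    case F1: False
    show ?thesis
    proof (cases "Suc j < e")
      case True
      have "r \<in> argmax_k E y (Suc j)" using argmax_mem[OF r] j Y(1) Ly_def by auto
      hence "r \<in> argmax_k E x (Suc j)" using eq True by auto
      hence "j < length Lx" "Lx ! j = x r" using argmax_mem[OF r] X(1) Lx_def by auto
      then show ?thesis using i X(3) by (metis nth_eq_iff_index_eq)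
    next
      case False
      then show ?thesis using F1 i j X(1) Y(1) cx cy by linarith
    qed
  qed
  obtain ip where ip: "ip < length Lx" "Lx ! ip = x p" using X(2) p by (metis imageI in_set_conv_nth)
  obtain iq where iq: "iq < length Lx" "Lx ! iq = x q" using X(2) q by (metis imageI in_set_conv_nth)
  obtain jp where jp: "jp < length Ly" "Ly ! jp = y p" using Y(2) p by (metis imageI in_set_conv_nth)
  obtain jq where jq: "jq < length Ly" "Ly ! jq = y q" using Y(2) q by (metis imageI in_set_conv_nth)
  have "ip = jp" using same[OF p ip jp] .
  moreover have "iq = jq" using same[OF q iq jq] .
  ultimately show ?thesis using X(4)[OF ip(1) iq(1)] Y(4)[OF jp(1) jq(1)] ip iq jp jq by auto
qed


definition lca :: "nat set set \<Rightarrow> nat \<Rightarrow> nat \<Rightarrow> nat set" where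
  "lca H i j = \<Inter>{A\<in>H. i \<in> A \<and> j \<in> A}"

lemma tu_lca: "tree_ultrametric H h i j = 2 * h (lca H i j)"
  by (simp add: tree_ultrametric_def lca_def)

lemma lca_sym: "lca H i j = lca H j i" unfolding lca_def by metis

lemma lca_props:
  assumes hH: "hierarchy n H" and i: "i \<in> {1..n}" and j: "j \<in> {1..n}"
  shows "lca H i j \<in> H" "i \<in> lca H i j" "j \<in> lca H i j"
    "\<And>A. A \<in> H \<Longrightarrow> i \<in> A \<Longrightarrow> j \<in> A \<Longrightarrow> lca H i j \<subseteq> A"
proof -
  define F where "F = {A\<in>H. i \<in> A \<and> j \<in> A}"
  have HP: "H \<subseteq> Pow {1..n}" and top: "{1..n} \<in> H"
    and lam: "\<forall>A\<in>H. \<forall>B\<in>H. A \<subseteq> B \<or> B \<subseteq> A \<or> A \<inter> B = {}"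
    using hH by (auto simp: hierarchy_def)
  have finH: "finite H" using HP finite_subset by blast
  have finF: "finite F" using finH by (simp add: F_def)
  have topF: "{1..n} \<in> F" using top i j by (simp add: F_def)
  have "Min (card ` F) \<in> card ` F" using finF topF by (intro Min_in) auto
  then obtain M where M: "M \<in> F" "card M = Min (card ` F)" by auto
  have Msub: "M \<subseteq> A" if A: "A \<in> F" for A
  proof -
    have "M \<in> H" "A \<in> H" "i \<in> M" "i \<in> A" using M(1) A by (auto simp: F_def)
    hence c0: "M \<subseteq> A \<or> A \<subseteq> M \<or> M \<inter> A = {}" using lam by simp
    have c: "M \<subseteq> A \<or> A \<subset> M" using c0 \<open>i \<in> M\<close> \<open>i \<in> A\<close> by blast
    have "finite M" using \<open>M \<in> H\<close> HP finite_subset by blast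
    moreover have "card M \<le> card A" using M(2) A finF by simp
    ultimately show ?thesis using c psubset_card_mono[of M A] by linarith
  qed
  have eq0: "\<Inter>F = M" using Msub M(1) by blast
  have eq: "lca H i j = M" using eq0 by (simp add: lca_def F_def)
  show "lca H i j \<in> H" "i \<in> lca H i j" "j \<in> lca H i j" using eq M(1) by (auto simp: F_def)
  show "\<And>A. A \<in> H \<Longrightarrow> i \<in> A \<Longrightarrow> j \<in> A \<Longrightarrow> lca H i j \<subseteq> A" unfolding lca_def by blast
qed

lemma lca_exists:
  assumes hH: "hierarchy n H" and C: "C \<in> H" "2 \<le> card C" and i: "i \<in> C"
  shows "\<exists>j\<in>C. j \<noteq> i \<and> lca H i j = C"
proof -
  have HP: "H \<subseteq> Pow {1..n}"
    and lam: "\<forall>A\<in>H. \<forall>B\<in>H. A \<subseteq> B \<or> B \<subseteq> A \<or> A \<inter> B = {}"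
    using hH by (auto simp: hierarchy_def)
  have Cn: "C \<subseteq> {1..n}" using C HP by auto
  have finC: "finite C" using Cn finite_subset by blast
  define S where "S = C - {i}"
  have finS: "finite S" using finC by (simp add: S_def)
  have "S \<noteq> {}"
  proof
    assume "S = {}" hence "C = {i}" using i by (auto simp: S_def)
    thus False using C by simp
  qed
  have "Max ((\<lambda>x. card (lca H i x)) ` S) \<in> (\<lambda>x. card (lca H i x)) ` S"
    using finS \<open>S \<noteq> {}\<close> by (intro Max_in) auto
  then obtain j where j: "j \<in> S" "card (lca H i j) = Max ((\<lambda>x. card (lca H i x)) ` S)" by auto
  have jmax: "card (lca H i x) \<le> card (lca H i j)" if "x \<in> S" for x
    using j(2) finS that by simp
  have jC: "j \<in> C" "j \<noteq> i" using j(1) by (auto simp: S_def)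
  have iN: "i \<in> {1..n}" and jN: "j \<in> {1..n}" using i jC Cn by auto
  note Lj = lca_props[OF hH iN jN]
  have sub: "lca H i j \<subseteq> C" using Lj(4)[OF C(1) i jC(1)] .
  have "lca H i j = C"
  proof (rule ccontr)
    assume ne: "lca H i j \<noteq> C"
    then obtain x where x: "x \<in> C" "x \<notin> lca H i j" using sub by blast
    have xi: "x \<noteq> i" using x Lj(2) by auto
    have xN: "x \<in> {1..n}" using x Cn by auto
    note Lx = lca_props[OF hH iN xN]
    have "lca H i j \<subseteq> lca H i x \<or> lca H i x \<subseteq> lca H i j"
      using lam Lx(1) Lj(1) Lx(2) Lj(2) by blast
    hence ps: "lca H i j \<subset> lca H i x" using x Lx(3) by blast
    have "lca H i x \<subseteq> C" using Lx(4)[OF C(1) i x(1)] .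
    hence "finite (lca H i x)" using finC finite_subset by blast
    hence "card (lca H i j) < card (lca H i x)" using ps psubset_card_mono by blast
    moreover have "x \<in> S" using x xi by (simp add: S_def)
    ultimately show False using jmax by fastforce
  qed
  thus ?thesis using jC by blast
qed

lemma cluster_char:
  assumes eT: "equidistant_tree n H h" and iN: "i \<in> {1..n}" and jN: "j \<in> {1..n}" and ij: "i \<noteq> j"
  shows "lca H i j = insert i {x \<in> {1..n}. x \<noteq> i \<and> tree_ultrametric H h i x \<le> tree_ultrametric H h i j}"
proof -
  have hH: "hierarchy n H" using eT unfolding equidistant_tree_def by blast
  have mono: "\<forall>A\<in>H. \<forall>B\<in>H. A \<subset> B \<longrightarrow> h A \<le> h B"
    using eT unfolding equidistant_tree_def by blast
  have smono: "\<forall>A\<in>H. \<forall>B\<in>H. A \<subset> B \<and> 2 \<le> card A \<longrightarrow> h A < h B"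
    using eT unfolding equidistant_tree_def by blast
  have HP: "H \<subseteq> Pow {1..n}" using hH unfolding hierarchy_def by blast
  have lam: "\<forall>A\<in>H. \<forall>B\<in>H. A \<subseteq> B \<or> B \<subseteq> A \<or> A \<inter> B = {}"
    using hH unfolding hierarchy_def by blast
  define C where "C = lca H i j"
  note Lj = lca_props[OF hH iN jN, folded C_def]
  have Cn: "C \<subseteq> {1..n}" using Lj(1) HP by blast
  have finC: "finite C" using Cn finite_subset by blast
  have ijC: "{i, j} \<subseteq> C" using Lj(2,3) by blast
  have "card {i, j} = 2" using ij by simp
  hence c2: "2 \<le> card C" using card_mono[OF finC ijC] by linarith
  have K: "x \<in> C \<longleftrightarrow> h (lca H i x) \<le> h C" if xN: "x \<in> {1..n}" for x
  proof -
    note Lx = lca_props[OF hH iN xN]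
    show ?thesis
    proof
      assume "x \<in> C"
      hence sub: "lca H i x \<subseteq> C" using Lx(4)[OF Lj(1) Lj(2)] by blast
      show "h (lca H i x) \<le> h C"
      proof (cases "lca H i x = C")
        case True thus ?thesis by simp
      next
        case False
        hence "lca H i x \<subset> C" using sub by blast
        thus ?thesis using mono Lx(1) Lj(1) by blast
      qed
    next
      assume le: "h (lca H i x) \<le> h C"
      show "x \<in> C"
      proof (rule ccontr)
        assume xC: "x \<notin> C"
        have "C \<subseteq> lca H i x \<or> lca H i x \<subseteq> C \<or> C \<inter> lca H i x = {}" using lam Lx(1) Lj(1) by blast
        hence "C \<subset> lca H i x" using xC Lx(2) Lx(3) Lj(2) by blast
        hence "C \<subset> lca H i x \<and> 2 \<le> card C" using c2 by simp
        hence "h C < h (lca H i x)" using smono Lx(1) Lj(1) by blast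
        thus False using le by simp
      qed
    qed
  qed
  show ?thesis unfolding tu_lca C_def[symmetric]
  proof (rule set_eqI)
    fix x
    show "x \<in> C \<longleftrightarrow> x \<in> insert i {x \<in> {1..n}. x \<noteq> i \<and> 2 * h (lca H i x) \<le> 2 * h C}"
    proof (cases "x = i")
      case True thus ?thesis using Lj(2) by simp
    next
      case False
      show ?thesis
      proof (cases "x \<in> {1..n}")
        case True thus ?thesis using K[OF True] False by simp
      next
        case F2: False thus ?thesis using Cn False by blast
      qed
    qed
  qed
qed

lemma card_leaf_pairs: "card (leaf_pairs n) \<le> n choose 2"
proof -
  have "inj_on (\<lambda>(i, j). {i, j}) (leaf_pairs n)"
    by (auto simp: inj_on_def leaf_pairs_def doubleton_eq_iff)
  moreover have "(\<lambda>(i, j). {i, j}) ` leaf_pairs n \<subseteq> {B. B \<subseteq> {1..n} \<and> card B = 2}"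
    by (auto simp: leaf_pairs_def)
  moreover have "finite {B. B \<subseteq> {1..n} \<and> card B = (2::nat)}" by simp
  ultimately have "card (leaf_pairs n) \<le> card {B. B \<subseteq> {1..n} \<and> card B = 2}"
    using card_inj_on_le by blast
  also have "\<dots> = n choose 2" using n_subsets[of "{1..n}" 2] by simp
  finally show ?thesis .
qed


lemma tu_sym: "tree_ultrametric H h i j = tree_ultrametric H h j i"
  by (simp add: tu_lca lca_sym)

lemma subset_H:
  assumes e1: "equidistant_tree n H1 h1" and e2: "equidistant_tree n H2 h2"
    and ord: "\<And>i x j. i \<in> {1..n} \<Longrightarrow> x \<in> {1..n} \<Longrightarrow> j \<in> {1..n} \<Longrightarrow> x \<noteq> i \<Longrightarrow> j \<noteq> i \<Longrightarrow>
       (tree_ultrametric H1 h1 i x \<le> tree_ultrametric H1 h1 i j \<longleftrightarrow>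
        tree_ultrametric H2 h2 i x \<le> tree_ultrametric H2 h2 i j)"
  shows "H1 \<subseteq> H2"
proof
  fix C assume C: "C \<in> H1"
  have hH1: "hierarchy n H1" and hH2: "hierarchy n H2" using e1 e2 by (auto simp: equidistant_tree_def)
  have HP1: "H1 \<subseteq> Pow {1..n}" and ne1: "{} \<notin> H1" using hH1 unfolding hierarchy_def by blast+
  have sing2: "\<forall>i\<in>{1..n}. {i} \<in> H2" using hH2 unfolding hierarchy_def by blast
  have Cn: "C \<subseteq> {1..n}" using C HP1 by blast
  have Cne: "C \<noteq> {}" using C ne1 by blast
  have finC: "finite C" using Cn finite_subset by blast
  show "C \<in> H2"
  proof (cases "2 \<le> card C")
    case True
    obtain i where i: "i \<in> C" using Cne by blast
    obtain j where j: "j \<in> C" "j \<noteq> i" "lca H1 i j = C" using lca_exists[OF hH1 C True i] by blast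
    have iN: "i \<in> {1..n}" and jN: "j \<in> {1..n}" using i j Cn by auto
    have "C = insert i {x \<in> {1..n}. x \<noteq> i \<and> tree_ultrametric H1 h1 i x \<le> tree_ultrametric H1 h1 i j}"
      using cluster_char[OF e1 iN jN j(2)[symmetric]] j(3) by simp
    also have "\<dots> = insert i {x \<in> {1..n}. x \<noteq> i \<and> tree_ultrametric H2 h2 i x \<le> tree_ultrametric H2 h2 i j}"
      by (intro arg_cong[where f="insert i"] Collect_cong) (use ord[OF iN _ jN _ j(2)] in auto)
    also have "\<dots> = lca H2 i j"
      using cluster_char[OF e2 iN jN j(2)[symmetric]] by simp
    finally show ?thesis using lca_props(1)[OF hH2 iN jN] by simp
  next
    case False
    have "card C \<noteq> 0" using finC Cne by simp
    hence "card C = 1" using False by linarith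
    then obtain i where "C = {i}" using card_1_singletonE by blast
    then show ?thesis using Cn sing2 by blast
  qed
qed

theorem lemma2:
  fixes n :: nat and H1 H2 :: "nat set set" and h1 h2 :: "nat set \<Rightarrow> real"
  assumes "equidistant_tree n H1 h1"
    and "equidistant_tree n H2 h2"
    and "\<forall>k. 0 < k \<and> k < n choose 2 \<longrightarrow>
           argmax_k (leaf_pairs n) (\<lambda>(i, j). tree_ultrametric H1 h1 i j) k =
           argmax_k (leaf_pairs n) (\<lambda>(i, j). tree_ultrametric H2 h2 i j) k"
  shows "H1 = H2"
proof -
  define f1 where "f1 = (\<lambda>(i, j). tree_ultrametric H1 h1 i j)"
  define f2 where "f2 = (\<lambda>(i, j). tree_ultrametric H2 h2 i j)"
  have finE: "finite (leaf_pairs n)"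
    by (rule finite_subset[of _ "{1..n} \<times> {1..n}"]) (auto simp: leaf_pairs_def)
  have f1e: "f1 (min i x, max i x) = tree_ultrametric H1 h1 i x" for i x
    by (cases "i \<le> x") (auto simp: f1_def min_def max_def tu_sym)
  have f2e: "f2 (min i x, max i x) = tree_ultrametric H2 h2 i x" for i x
    by (cases "i \<le> x") (auto simp: f2_def min_def max_def tu_sym)
  have mem: "(min i x, max i x) \<in> leaf_pairs n" if "i \<in> {1..n}" "x \<in> {1..n}" "x \<noteq> i" for i x
    using that by (auto simp: leaf_pairs_def min_def max_def)
  have ord: "tree_ultrametric H1 h1 i x \<le> tree_ultrametric H1 h1 i j \<longleftrightarrow>
        tree_ultrametric H2 h2 i x \<le> tree_ultrametric H2 h2 i j"
    if "i \<in> {1..n}" "x \<in> {1..n}" "j \<in> {1..n}" "x \<noteq> i" "j \<noteq> i" for i x j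
  proof -
    have "f1 (min i x, max i x) \<le> f1 (min i j, max i j) \<longleftrightarrow> f2 (min i x, max i x) \<le> f2 (min i j, max i j)"
      by (rule order_transfer[OF finE card_leaf_pairs assms(3)[folded f1_def f2_def]]) (use mem that in auto)
    thus ?thesis by (simp only: f1e f2e)
  qed
  show ?thesis
  proof
    show "H1 \<subseteq> H2" by (rule subset_H[OF assms(1,2) ord])
    show "H2 \<subseteq> H1"
    proof (rule subset_H[OF assms(2,1)])
      fix i x j assume a: "i \<in> {1..n}" "x \<in> {1..n}" "j \<in> {1..n}" "x \<noteq> i" "j \<noteq> i"
      show "tree_ultrametric H2 h2 i x \<le> tree_ultrametric H2 h2 i j \<longleftrightarrow>
        tree_ultrametric H1 h1 i x \<le> tree_ultrametric H1 h1 i j"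
        using ord[OF a] by (rule sym)
    qed
  qed
qed

end
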